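(* Let $X$ be a topological space in which every open set is a union of countably many clopen sets. Then $X$ is hereditarily Hurewicz (i.e., every subspace of $X$ satisfies $\mathsf{U}_{fin}(\mathrm{O},\Gamma)$) if, and only if, for every continuous map $\Psi:X\to\mathrm{EF}$, the image $\Psi[X]$ is bounded.
   Context: A cover $\mathcal{U}$ of a space $Y$ is point-cofinite if it is infinite and each point of $Y$ belongs to all but finitely many members of $\mathcal{U}$. A space $Y$ satisfies $\mathsf{U}_{fin}(\mathrm{O},\Gamma)$ (the Hurewicz property) if whenever $\mathcal{U}_1,\mathcal{U}_2,\dots$ are countable open covers of $Y$ none of which contains a finite subcover, there are finite sets $\mathcal{F}_n\subseteq\mathcal{U}_n$ such that $\{\bigcup\mathcal{F}_n:n\in\mathbb{N}\}$ is a point-cofinite cover of $Y$. Let $\overline{\mathbb{N}}=\mathbb{N}\cup\{\infty\}$ be the one-point compactification of $\mathbb{N}$, and give $\overline{\mathbb{N}}^{\mathbb{N}}$ the product topology. $\mathrm{EF}$ is the subspace of $\overline{\mathbb{N}}^{\mathbb{N}}$ of eventually finite elements, i.e., those $f$ for which there is $m$ with $f(n)<\infty$ for all $n\ge m$. For $f\in\mathrm{EF}$ and $g\in\mathbb{N}^{\mathbb{N}}$, $f\le^* g$ means $f(n)\le g(n)$ for all but finitely many $n$. A set $Y\subseteq\mathrm{EF}$ is bounded if there is $g\in\mathbb{N}^{\mathbb{N}}$ with $f\le^*g$ for all $f\in Y$. *)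

theory Defs
  imports "HOL-Analysis.Analysis"
begin

definition point_cofinite_cover :: "'a topology \<Rightarrow> 'a set set \<Rightarrow> bool" where
  "point_cofinite_cover T \<V> \<longleftrightarrow>
     infinite \<V> \<and> \<Union>\<V> = topspace T \<and>
     (\<forall>y\<in>topspace T. finite {V\<in>\<V>. y \<notin> V})"

definition hurewicz :: "'a topology \<Rightarrow> bool" where
  "hurewicz T \<longleftrightarrow>
     (\<forall>\<U> :: nat \<Rightarrow> 'a set set.
        (\<forall>n. countable (\<U> n) \<and> (\<forall>U\<in>\<U> n. openin T U) \<and> \<Union>(\<U> n) = topspace T \<and>
             \<not> (\<exists>\<F>. finite \<F> \<and> \<F> \<subseteq> \<U> n \<and> \<Union>\<F> = topspace T))
        \<longrightarrow> (\<exists>\<F> :: nat \<Rightarrow> 'a set set.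
               (\<forall>n. finite (\<F> n) \<and> \<F> n \<subseteq> \<U> n) \<and>
               point_cofinite_cover T (range (\<lambda>n. \<Union>(\<F> n)))))"

definition hereditarily_hurewicz :: "'a topology \<Rightarrow> bool" where
  "hereditarily_hurewicz X \<longleftrightarrow> (\<forall>Y \<subseteq> topspace X. hurewicz (subtopology X Y))"

text \<open>The one-point compactification of N is enat with its order topology;
  EF is the subspace of eventually finite sequences of the product space.\<close>
definition EF :: "(nat \<Rightarrow> enat) set" where
  "EF = {f. \<exists>m. \<forall>n\<ge>m. f n < \<infinity>}"

definition EF_top :: "(nat \<Rightarrow> enat) topology" where
  "EF_top = subtopology (product_topology (\<lambda>_. euclidean) UNIV) EF"

definition bounded_EF :: "(nat \<Rightarrow> enat) set \<Rightarrow> bool" where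
  "bounded_EF Y \<longleftrightarrow> (\<exists>g :: nat \<Rightarrow> nat. \<forall>f\<in>Y. \<forall>\<^sub>F n in sequentially. f n \<le> enat (g n))"

end

theory Submission
  imports Defs
begin


lemma enat_cont_crit:
  fixes f :: "'a \<Rightarrow> enat"
  assumes o1: "\<And>t. openin X {x\<in>topspace X. f x = enat t}"
      and o2: "\<And>t. openin X {x\<in>topspace X. enat t < f x}"
  shows "continuous_map X euclidean f"
  unfolding continuous_map
proof (intro conjI allI impI)
  show "f ` topspace X \<subseteq> topspace euclidean" by simp
  fix U :: "enat set" assume "openin euclidean U"
  hence oU: "open U" by simp
  show "openin X {x \<in> topspace X. f x \<in> U}"
  proof (cases "\<infinity> \<in> U")
    case True
    then obtain n where n: "{enat n<..} \<subseteq> U" using oU open_enat_iff by blast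
    have "{x \<in> topspace X. f x \<in> U} = (\<Union>t\<in>{t. enat t \<in> U}. {x\<in>topspace X. f x = enat t}) \<union>
      {x\<in>topspace X. enat n < f x}"
    proof (rule set_eqI)
      fix x show "x \<in> {x \<in> topspace X. f x \<in> U} \<longleftrightarrow> x \<in> (\<Union>t\<in>{t. enat t \<in> U}. {x\<in>topspace X. f x = enat t}) \<union>
      {x\<in>topspace X. enat n < f x}"
        using n True by (cases "f x") auto
    qed
    then show ?thesis using o1 o2 by (metis (no_types, lifting) openin_Un openin_Union imageE)
  next
    case False
    have "{x \<in> topspace X. f x \<in> U} = (\<Union>t\<in>{t. enat t \<in> U}. {x\<in>topspace X. f x = enat t})"
    proof (rule set_eqI)
      fix x show "x \<in> {x \<in> topspace X. f x \<in> U} \<longleftrightarrow> x \<in> (\<Union>t\<in>{t. enat t \<in> U}. {x\<in>topspace X. f x = enat t})"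
        using False by (cases "f x") auto
    qed
    then show ?thesis using o1 by (metis (no_types, lifting) openin_Union imageE)
  qed
qed

lemma paste_clopen:
  assumes "openin X S" "closedin X S" "continuous_map X Y f" "continuous_map X Y g"
  shows "continuous_map X Y (\<lambda>x. if x \<in> S then f x else g x)"
  unfolding continuous_map
proof (intro conjI allI impI)
  have "f ` topspace X \<subseteq> topspace Y" "g ` topspace X \<subseteq> topspace Y"
    using continuous_map_image_subset_topspace assms(3,4) by blast+
  then show "(\<lambda>x. if x \<in> S then f x else g x) ` topspace X \<subseteq> topspace Y"
    by auto
  fix U assume U: "openin Y U"
  have eq: "{x \<in> topspace X. (if x \<in> S then f x else g x) \<in> U} =
     (S \<inter> {x \<in> topspace X. f x \<in> U}) \<union> ((topspace X - S) \<inter> {x \<in> topspace X. g x \<in> U})"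
    by auto
  have c: "openin X (topspace X - S)" using assms(2) by (simp add: openin_diff)
  have a: "openin X (S \<inter> {x \<in> topspace X. f x \<in> U})"
    using assms(1) openin_continuous_map_preimage[OF assms(3) U] by (rule openin_Int)
  have b: "openin X ((topspace X - S) \<inter> {x \<in> topspace X. g x \<in> U})"
    using c openin_continuous_map_preimage[OF assms(4) U] by (rule openin_Int)
  show "openin X {x \<in> topspace X. (if x \<in> S then f x else g x) \<in> U}"
    unfolding eq using a b by (rule openin_Un)
qed

lemma finite_sub_range_bound:
  fixes S :: "nat \<Rightarrow> 'a set"
  assumes "finite F" "F \<subseteq> range S" "\<And>i j. i \<le> j \<Longrightarrow> S i \<subseteq> S j"
  shows "\<exists>K. \<Union>F \<subseteq> S K"
proof -
  obtain I where I: "finite I" "F = S ` I" using assms finite_subset_image by metis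
  show ?thesis
  proof (intro exI[of _ "Max (insert 0 I)"] subsetI)
    fix x assume "x \<in> \<Union>F"
    then obtain i where i: "i \<in> I" "x \<in> S i" using I by auto
    have "i \<le> Max (insert 0 I)" using I(1) i(1) by simp
    then show "x \<in> S (Max (insert 0 I))" using assms(3) i(2) by blast
  qed
qed

lemma hur_bound:
  fixes h :: "nat \<Rightarrow> 'a \<Rightarrow> nat"
  assumes H: "hurewicz T"
    and op: "\<And>n k. openin T {x\<in>topspace T. h n x \<le> k}"
    and mono: "\<And>n x. h n x \<le> h (Suc n) x"
  shows "\<exists>g. \<forall>x\<in>topspace T. \<forall>\<^sub>F n in sequentially. h n x \<le> g n"
proof -
  define S where "S n k = {x\<in>topspace T. h n x \<le> k}" for n k
  define U where "U n = range (S n)" for n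
  have monoh: "h i x \<le> h j x" if "i \<le> j" for i j x
    by (rule lift_Suc_mono_le[where f="\<lambda>n. h n x"]) (simp_all add: mono that)
  have Smono: "S n i \<subseteq> S n j" if "i \<le> j" for n i j using that by (auto simp: S_def)
  have fin_bound: "\<exists>K. \<forall>x\<in>topspace T. h n x \<le> K"
    if fF: "finite F" and sF: "F \<subseteq> U n" and cF: "\<Union>F = topspace T" for F n
  proof -
    have Fr: "F \<subseteq> range (S n)" using sF by (simp add: U_def)
    have "\<exists>K. \<Union>F \<subseteq> S n K" by (rule finite_sub_range_bound[OF fF Fr]) (rule Smono)
    then obtain K where K: "\<Union>F \<subseteq> S n K" by (elim exE)
    have "\<forall>x\<in>topspace T. h n x \<le> K"
    proof
      fix x assume "x \<in> topspace T"
      then have "x \<in> S n K" using K cF by blast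
      then show "h n x \<le> K" by (simp add: S_def)
    qed
    thus ?thesis by blast
  qed
  show ?thesis
  proof (cases "\<forall>n. \<exists>F. finite F \<and> F \<subseteq> U n \<and> \<Union>F = topspace T")
    case True
    have "\<forall>n. \<exists>K. \<forall>x\<in>topspace T. h n x \<le> K"
    proof
      fix n
      from True have "\<exists>F. finite F \<and> F \<subseteq> U n \<and> \<Union>F = topspace T" by (rule spec)
      then obtain F where "finite F" "F \<subseteq> U n" "\<Union>F = topspace T" by (elim exE conjE)
      then show "\<exists>K. \<forall>x\<in>topspace T. h n x \<le> K" by (rule fin_bound)
    qed
    then have "\<exists>K. \<forall>n. \<forall>x\<in>topspace T. h n x \<le> K n" by (rule choice)
    then obtain K where K: "\<forall>n. \<forall>x\<in>topspace T. h n x \<le> K n" by (elim exE)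
    show ?thesis
    proof (intro exI[of _ K] ballI always_eventually allI)
      fix x n assume "x \<in> topspace T"
      then show "h n x \<le> K n" using K by simp
    qed
  next
    case False
    then have "\<exists>N. \<not> (\<exists>F. finite F \<and> F \<subseteq> U N \<and> \<Union>F = topspace T)" by (simp only: not_all)
    then obtain N where N: "\<not> (\<exists>F. finite F \<and> F \<subseteq> U N \<and> \<Union>F = topspace T)" by (elim exE)
    have nocov: "\<not> (\<exists>F. finite F \<and> F \<subseteq> U j \<and> \<Union>F = topspace T)" if Nj: "N \<le> j" for j
    proof
      assume "\<exists>F. finite F \<and> F \<subseteq> U j \<and> \<Union>F = topspace T"
      then obtain F where "finite F" "F \<subseteq> U j" "\<Union>F = topspace T" by (elim exE conjE)
      then have "\<exists>K. \<forall>x\<in>topspace T. h j x \<le> K" by (rule fin_bound)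
      then obtain K where K: "\<forall>x\<in>topspace T. h j x \<le> K" by (elim exE)
      have "S N K = topspace T"
      proof (rule set_eqI)
        fix x show "x \<in> S N K \<longleftrightarrow> x \<in> topspace T"
          using K monoh[OF Nj, of x] unfolding S_def by auto
      qed
      moreover have "{S N K} \<subseteq> U N" by (simp add: U_def)
      ultimately have "finite {S N K} \<and> {S N K} \<subseteq> U N \<and> \<Union>{S N K} = topspace T" by simp
      then have "\<exists>F. finite F \<and> F \<subseteq> U N \<and> \<Union>F = topspace T" by (rule exI)
      with N show False by (rule notE)
    qed
    define V where "V j = U (N + j)" for j
    have "\<forall>j. countable (V j) \<and> (\<forall>W\<in>V j. openin T W) \<and> \<Union>(V j) = topspace T \<and>
             \<not> (\<exists>F. finite F \<and> F \<subseteq> V j \<and> \<Union>F = topspace T)"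
    proof (intro allI conjI)
      fix j
      show "countable (V j)" by (simp add: V_def U_def)
      show "\<forall>W\<in>V j. openin T W" using op by (auto simp: V_def U_def S_def)
      show "\<Union>(V j) = topspace T" by (auto simp: V_def U_def S_def)
      show "\<not> (\<exists>F. finite F \<and> F \<subseteq> V j \<and> \<Union>F = topspace T)" using nocov[of "N+j"] by (simp add: V_def)
    qed
    from mp[OF spec[OF H[unfolded hurewicz_def], of V] this] obtain F where F: "\<forall>j. finite (F j) \<and> F j \<subseteq> V j"
        and pc: "point_cofinite_cover T (range (\<lambda>j. \<Union>(F j)))" by blast
    define W where "W j = \<Union>(F j)" for j
    have "\<exists>K. W j \<subseteq> S (N + j) K" for j
    proof -
      have fj: "finite (F j)" using F by blast
      have Fr: "F j \<subseteq> range (S (N+j))" using F by (simp add: V_def U_def)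
      show ?thesis unfolding W_def by (rule finite_sub_range_bound[OF fj Fr]) (rule Smono)
    qed
    then obtain k where k: "\<And>j. W j \<subseteq> S (N + j) (k j)" using choice[of "\<lambda>j K. W j \<subseteq> S (N + j) K"] by blast
    have infr: "infinite (range W)" using pc by (simp add: point_cofinite_cover_def W_def)
    have "\<exists>j. W j \<notin> W ` {..<n}" for n
    proof (rule ccontr)
      assume "\<not> ?thesis"
      hence "range W \<subseteq> W ` {..<n}" by auto
      thus False using infr finite_subset by blast
    qed
    then obtain jj where jj: "\<And>n. W (jj n) \<notin> W ` {..<n}" using choice[of "\<lambda>n j. W j \<notin> W ` {..<n}"] by blast
    have jjn: "n \<le> jj n" for n using jj[of n] by (metis lessThan_iff not_le_imp_less rev_image_eqI)
    show ?thesis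
    proof (intro exI[of _ "\<lambda>n. k (jj n)"] ballI)
      fix x assume x: "x \<in> topspace T"
      have finB: "finite {V\<in>range W. x \<notin> V}" using pc x by (simp add: point_cofinite_cover_def W_def)
      obtain I where I: "finite I" "{V\<in>range W. x \<notin> V} = W ` I"
        using finite_subset_image[OF finB, of W UNIV] by auto
      obtain M where M: "I \<subseteq> {..<M}" using I(1) by (meson finite_nat_bounded)
      show "\<forall>\<^sub>F n in sequentially. h n x \<le> k (jj n)"
        unfolding eventually_sequentially
      proof (intro exI[of _ M] allI impI)
        fix n assume n: "M \<le> n"
        have "x \<in> W (jj n)"
        proof (rule ccontr)
          assume "x \<notin> W (jj n)"
          hence "W (jj n) \<in> W ` I" using I by auto
          hence "W (jj n) \<in> W ` {..<n}" using M n by auto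
          thus False using jj by blast
        qed
        hence "h (N + jj n) x \<le> k (jj n)" using k by (auto simp: S_def)
        moreover have "h n x \<le> h (N + jj n) x" using monoh jjn by (meson le_add2 le_trans)
        ultimately show "h n x \<le> k (jj n)" by simp
      qed
    qed
  qed
qed



lemma triangle_mono: "m \<le> n \<Longrightarrow> triangle m \<le> triangle n"
  by (rule lift_Suc_mono_le[where f=triangle]) simp_all

lemma prod_encode_mono2: "b \<le> b' \<Longrightarrow> prod_encode (a,b) \<le> prod_encode (a,b')"
  unfolding prod_encode_def by (simp add: triangle_mono)

fun iterR :: "(nat \<Rightarrow> nat) \<Rightarrow> nat \<Rightarrow> nat \<Rightarrow> nat \<Rightarrow> nat" where
  "iterR G K s 0 = s"
| "iterR G K s (Suc j) = G (prod_encode (K + j, iterR G K s j))"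

lemma iter_bound:
  fixes a :: "nat \<Rightarrow> nat"
  assumes step: "\<And>k. k \<ge> M \<Longrightarrow> a (Suc k) \<le> G (prod_encode (k, a k))"
    and monoG: "\<And>m n. m \<le> n \<Longrightarrow> G m \<le> G n"
  shows "a (M + j) \<le> iterR G M (a M) j"
proof (induction j)
  case 0
  then show ?case by simp
next
  case (Suc j)
  have "a (M + Suc j) = a (Suc (M + j))" by simp
  also have "\<dots> \<le> G (prod_encode (M + j, a (M + j)))" by (rule step) simp
  also have "\<dots> \<le> G (prod_encode (M + j, iterR G M (a M) j))"
    by (rule monoG, rule prod_encode_mono2, rule Suc.IH)
  finally show ?case by simp
qed

definition Ef :: "(nat \<Rightarrow> 'a set) \<Rightarrow> 'a \<Rightarrow> enat" where
  "Ef B x = (if \<exists>i. x \<in> B i then enat (LEAST i. x \<in> B i) else \<infinity>)"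

lemma Ef_eq: "Ef B x = enat t \<longleftrightarrow> x \<in> B t \<and> (\<forall>i<t. x \<notin> B i)"
proof (cases "\<exists>i. x \<in> B i")
  case True
  then have E: "Ef B x = enat (LEAST i. x \<in> B i)" by (simp add: Ef_def)
  show ?thesis
  proof
    assume "Ef B x = enat t"
    then have t: "t = (LEAST i. x \<in> B i)" using E by simp
    show "x \<in> B t \<and> (\<forall>i<t. x \<notin> B i)"
      unfolding t using True by (meson LeastI_ex not_less_Least)
  next
    assume a: "x \<in> B t \<and> (\<forall>i<t. x \<notin> B i)"
    have "(LEAST i. x \<in> B i) = t"
      by (rule Least_equality) (use a in \<open>auto simp: not_less[symmetric]\<close>)
    then show "Ef B x = enat t" using E by simp
  qed
next
  case False
  then show ?thesis by (simp add: Ef_def)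
qed

lemma Ef_gt: "enat t < Ef B x \<longleftrightarrow> (\<forall>i\<le>t. x \<notin> B i)"
proof (cases "\<exists>i. x \<in> B i")
  case True
  then have E: "Ef B x = enat (LEAST i. x \<in> B i)" by (simp add: Ef_def)
  show ?thesis
  proof
    assume "enat t < Ef B x"
    then have lt: "t < (LEAST i. x \<in> B i)" using E by simp
    show "\<forall>i\<le>t. x \<notin> B i"
    proof (intro allI impI)
      fix i assume "i \<le> t"
      then have "i < (LEAST i. x \<in> B i)" using lt by simp
      then show "x \<notin> B i" by (rule not_less_Least)
    qed
  next
    assume a: "\<forall>i\<le>t. x \<notin> B i"
    have "x \<in> B (LEAST i. x \<in> B i)" using True by (rule LeastI_ex)
    then have "\<not> (LEAST i. x \<in> B i) \<le> t" using a by blast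
    then show "enat t < Ef B x" using E by simp
  qed
next
  case False
  then show ?thesis by (simp add: Ef_def)
qed

lemma Ef_le: "x \<in> B t \<Longrightarrow> Ef B x \<le> enat t"
proof -
  assume x: "x \<in> B t"
  then have "\<exists>i. x \<in> B i" by blast
  then have E: "Ef B x = enat (LEAST i. x \<in> B i)" by (simp add: Ef_def)
  have "(LEAST i. x \<in> B i) \<le> t" using x by (rule Least_le)
  then show ?thesis using E by simp
qed

lemma Ef_level:
  assumes "\<And>i. openin X (B i)" "\<And>i. closedin X (B i)"
  shows "{x\<in>topspace X. Ef B x = enat t} = B t - (\<Union>i\<in>{..<t}. B i)"
proof -
  have "B t \<subseteq> topspace X" using assms(2) closedin_subset by blast
  then show ?thesis unfolding Ef_eq by blast
qed

lemma Ef_clop: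
  assumes o: "\<And>i. openin X (B i)" and c: "\<And>i. closedin X (B i)"
  shows "openin X {x\<in>topspace X. Ef B x = enat t}" "closedin X {x\<in>topspace X. Ef B x = enat t}"
proof -
  have "closedin X (\<Union>i\<in>{..<t}. B i)" by (rule closedin_Union) (auto intro: c)
  then show "openin X {x\<in>topspace X. Ef B x = enat t}"
    unfolding Ef_level[OF o c] using o by (rule_tac openin_diff) auto
  have "openin X (\<Union>i\<in>{..<t}. B i)" by (rule openin_Union) (auto intro: o)
  then show "closedin X {x\<in>topspace X. Ef B x = enat t}"
    unfolding Ef_level[OF o c] using c by (rule_tac closedin_diff) auto
qed

lemma Ef_cont:
  assumes o: "\<And>i. openin X (B i)" and c: "\<And>i. closedin X (B i)"
  shows "continuous_map X euclidean (Ef B)"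
proof (rule enat_cont_crit)
  fix t
  show "openin X {x \<in> topspace X. Ef B x = enat t}" by (rule Ef_clop(1)[OF o c])
  have eq: "{x \<in> topspace X. enat t < Ef B x} = topspace X - (\<Union>i\<in>{..t}. B i)"
    unfolding Ef_gt by blast
  have "closedin X (\<Union>i\<in>{..t}. B i)" by (rule closedin_Union) (auto intro: c)
  then show "openin X {x \<in> topspace X. enat t < Ef B x}"
    unfolding eq by (rule openin_diff[OF openin_topspace])
qed



definition PsiE :: "(nat \<Rightarrow> 'a \<Rightarrow> enat) \<Rightarrow> 'a \<Rightarrow> nat \<Rightarrow> enat" where
  "PsiE E x c = (case prod_decode c of (k, t) \<Rightarrow> if E k x = enat t then E (Suc k) x else 0)"

lemma PsiE_enc: "PsiE E x (prod_encode (k,t)) = (if E k x = enat t then E (Suc k) x else 0)"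
  by (simp add: PsiE_def)

lemma PsiE_cont:
  assumes cE: "\<And>k. continuous_map X euclidean (E k)"
    and oE: "\<And>k t. openin X {x\<in>topspace X. E k x = enat t}"
    and clE: "\<And>k t. closedin X {x\<in>topspace X. E k x = enat t}"
    and mE: "\<And>k k' x. k \<le> k' \<Longrightarrow> E k x \<le> E k' x"
  shows "continuous_map X EF_top (PsiE E)"
  unfolding EF_top_def continuous_map_in_subtopology
proof
  show "continuous_map X (product_topology (\<lambda>_. euclidean) UNIV) (PsiE E)"
    unfolding continuous_map_componentwise_UNIV
  proof
    fix c
    obtain k t where kt: "prod_decode c = (k, t)" by (cases "prod_decode c")
    have c: "c = prod_encode (k,t)" using kt prod_decode_inverse[of c] by simp
    define P where "P = {x\<in>topspace X. E k x = enat t}"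
    have "continuous_map X euclidean (\<lambda>x. if x \<in> P then E (Suc k) x else 0)"
      unfolding P_def by (rule paste_clopen[OF oE clE cE]) simp
    then show "continuous_map X euclidean (\<lambda>x. PsiE E x c)"
      by (rule continuous_map_eq) (simp add: c PsiE_enc P_def)
  qed
  show "PsiE E \<in> topspace X \<rightarrow> EF"
  proof
    fix x assume x: "x \<in> topspace X"
    define Q where "Q = {(k,t). E k x = enat t \<and> E (Suc k) x = \<infinity>}"
    have uniq: "p = q" if p: "p \<in> Q" and q: "q \<in> Q" for p q
    proof -
      obtain k1 t1 where p1: "p = (k1,t1)" by (cases p)
      obtain k2 t2 where q2: "q = (k2,t2)" by (cases q)
      have a: "E k1 x = enat t1" "E (Suc k1) x = \<infinity>" using p p1 by (auto simp: Q_def)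
      have b: "E k2 x = enat t2" "E (Suc k2) x = \<infinity>" using q q2 by (auto simp: Q_def)
      have "\<not> k1 < k2"
      proof
        assume "k1 < k2"
        then have "E (Suc k1) x \<le> E k2 x" by (intro mE) simp
        then show False using a b by simp
      qed
      moreover have "\<not> k2 < k1"
      proof
        assume "k2 < k1"
        then have "E (Suc k2) x \<le> E k1 x" by (intro mE) simp
        then show False using a b by simp
      qed
      ultimately have "k1 = k2" by simp
      then show ?thesis using a b p1 q2 by simp
    qed
    have finQ: "finite Q"
    proof (cases "Q = {}")
      case False
      then obtain p where p: "p \<in> Q" by blast
      then have "Q \<subseteq> {p}" using uniq by blast
      then show ?thesis by (rule finite_subset) simp
    qed simp
    have Zsub: "{c. PsiE E x c = \<infinity>} \<subseteq> prod_encode ` Q"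
    proof
      fix c assume "c \<in> {c. PsiE E x c = \<infinity>}"
      then have cinf: "PsiE E x c = \<infinity>" by simp
      obtain k t where kt: "prod_decode c = (k, t)" by (cases "prod_decode c")
      have c: "c = prod_encode (k,t)" using kt prod_decode_inverse[of c] by simp
      have "E k x = enat t \<and> E (Suc k) x = \<infinity>"
        using cinf unfolding c PsiE_enc by (simp split: if_splits)
      then have "(k,t) \<in> Q" by (simp add: Q_def)
      then show "c \<in> prod_encode ` Q" using c by blast
    qed
    have "finite {c. PsiE E x c = \<infinity>}"
      by (rule finite_surj[OF finQ Zsub])
    then obtain m where m: "{c. PsiE E x c = \<infinity>} \<subseteq> {..<m}" using finite_nat_bounded by blast
    have "\<forall>n\<ge>m. PsiE E x n < \<infinity>"
    proof (intro allI impI)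
      fix n assume "m \<le> n"
      then have "n \<notin> {c. PsiE E x c = \<infinity>}" using m by auto
      then show "PsiE E x n < \<infinity>" by (cases "PsiE E x n") auto
    qed
    then show "PsiE E x \<in> EF" unfolding EF_def by blast
  qed
qed

lemma PsiE_bound:
  assumes g: "\<forall>y\<in>Y. \<forall>\<^sub>F n in sequentially. PsiE E y n \<le> enat (g n)"
    and fin: "\<And>k y. y \<in> Y \<Longrightarrow> E k y < \<infinity>"
  shows "\<exists>hb. \<forall>y\<in>Y. \<forall>\<^sub>F k in sequentially. E k y \<le> enat (hb k)"
proof -
  define G where "G n = (\<Sum>i\<le>n. g i)" for n
  have gG: "g n \<le> G n" for n unfolding G_def by (rule member_le_sum) auto
  have monoG: "G m \<le> G n" if "m \<le> n" for m n
    unfolding G_def by (rule sum_mono2) (use that in auto)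
  define hb where "hb k = (\<Sum>K\<le>k. \<Sum>s\<le>k. iterR G K s (k - K))" for k
  show ?thesis
  proof (intro exI[of _ hb] ballI)
    fix y assume y: "y \<in> Y"
    from g y obtain M where M: "\<And>n. n \<ge> M \<Longrightarrow> PsiE E y n \<le> enat (g n)"
      unfolding eventually_sequentially by blast
    define a where "a k = the_enat (E k y)" for k
    have Ea: "E k y = enat (a k)" for k
      unfolding a_def using fin[OF y, of k] by (cases "E k y") auto
    have step: "a (Suc k) \<le> G (prod_encode (k, a k))" if k: "k \<ge> M" for k
    proof -
      have "M \<le> prod_encode (k, a k)" using k le_prod_encode_1[of k "a k"] by linarith
      then have "PsiE E y (prod_encode (k, a k)) \<le> enat (g (prod_encode (k, a k)))" by (rule M)
      then have "E (Suc k) y \<le> enat (g (prod_encode (k, a k)))" unfolding PsiE_enc using Ea by simp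
      then have "a (Suc k) \<le> g (prod_encode (k, a k))" using Ea by simp
      then show ?thesis using gG le_trans by blast
    qed
    show "\<forall>\<^sub>F k in sequentially. E k y \<le> enat (hb k)"
      unfolding eventually_sequentially
    proof (intro exI[of _ "M + a M"] allI impI)
      fix k assume k: "M + a M \<le> k"
      have "a (M + (k - M)) \<le> iterR G M (a M) (k - M)"
        by (rule iter_bound[where a=a and G=G and M=M, OF step monoG]) auto
      then have "a k \<le> iterR G M (a M) (k - M)" using k by simp
      also have "\<dots> \<le> (\<Sum>s\<le>k. iterR G M s (k - M))"
        by (rule member_le_sum[where f="\<lambda>s. iterR G M s (k - M)"]) (use k in auto)
      also have "\<dots> \<le> hb k"
        unfolding hb_def by (rule member_le_sum[where f="\<lambda>K. \<Sum>s\<le>k. iterR G K s (k - K)"]) (use k in auto)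
      finally show "E k y \<le> enat (hb k)" using Ea by simp
    qed
  qed
qed



lemma enat_fin: "(e::enat) < \<infinity> \<Longrightarrow> e = enat (the_enat e)" by (cases e) auto

lemma fwd:
  assumes HH: "hereditarily_hurewicz X" and C: "continuous_map X EF_top \<Psi>"
  shows "bounded_EF (\<Psi> ` topspace X)"
proof -
  have CP: "continuous_map X (product_topology (\<lambda>_. euclidean) UNIV) \<Psi>"
    and inEF': "\<Psi> \<in> topspace X \<rightarrow> EF"
    using C unfolding EF_top_def continuous_map_in_subtopology by auto
  have inEF: "\<Psi> x \<in> EF" if "x \<in> topspace X" for x using inEF' that by blast
  have cc: "continuous_map X euclidean (\<lambda>x. \<Psi> x i)" for i
    using CP unfolding continuous_map_componentwise_UNIV by blast
  have opk: "openin X {x\<in>topspace X. \<Psi> x i \<le> enat k}" for i k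
  proof -
    have "openin X {x\<in>topspace X. \<Psi> x i \<in> {..<enat (Suc k)}}"
      by (rule openin_continuous_map_preimage[OF cc]) simp
    moreover have "{x\<in>topspace X. \<Psi> x i \<in> {..<enat (Suc k)}} = {x\<in>topspace X. \<Psi> x i \<le> enat k}"
    proof (rule Collect_cong)
      fix x show "(x \<in> topspace X \<and> \<Psi> x i \<in> {..<enat (Suc k)}) = (x \<in> topspace X \<and> \<Psi> x i \<le> enat k)"
        by (cases "\<Psi> x i") auto
    qed
    ultimately show ?thesis by simp
  qed
  define Xm where "Xm m = {x\<in>topspace X. \<forall>n\<ge>m. \<Psi> x n < \<infinity>}" for m
  define H where "H m n x = Max ((\<lambda>i. the_enat (\<Psi> x (i+m))) ` {..n})" for m n x
  have "\<exists>g. \<forall>x\<in>Xm m. \<forall>\<^sub>F n in sequentially. H m n x \<le> g n" for m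
  proof -
    define T where "T = subtopology X (Xm m)"
    have tT: "topspace T = Xm m" by (auto simp: T_def Xm_def)
    have sub: "Xm m \<subseteq> topspace X" by (auto simp: Xm_def)
    have HT: "hurewicz T" unfolding T_def using HH[unfolded hereditarily_hurewicz_def, rule_format, OF sub] .
    have op: "openin T {x\<in>topspace T. H m n x \<le> k}" for n k
    proof -
      have eq: "{x\<in>topspace T. H m n x \<le> k} = Xm m \<inter> (\<Inter>i\<in>{..n}. {x\<in>topspace X. \<Psi> x (i+m) \<le> enat k})"
      proof (rule set_eqI)
        fix x
        show "x \<in> {x\<in>topspace T. H m n x \<le> k} \<longleftrightarrow> x \<in> Xm m \<inter> (\<Inter>i\<in>{..n}. {x\<in>topspace X. \<Psi> x (i+m) \<le> enat k})"
        proof (cases "x \<in> Xm m")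
          case True
          have fin: "\<Psi> x (i+m) = enat (the_enat (\<Psi> x (i+m)))" for i
            using True unfolding Xm_def by (intro enat_fin) simp
          have "H m n x \<le> k \<longleftrightarrow> (\<forall>i\<in>{..n}. the_enat (\<Psi> x (i+m)) \<le> k)"
            unfolding H_def by (subst Max_le_iff) auto
          also have "\<dots> \<longleftrightarrow> (\<forall>i\<in>{..n}. \<Psi> x (i+m) \<le> enat k)"
            by (metis fin enat_ord_simps(1))
          finally show ?thesis using True tT by (auto simp: Xm_def)
        next
          case False
          then show ?thesis using tT by auto
        qed
      qed
      have "openin X (\<Inter>i\<in>{..n}. {x\<in>topspace X. \<Psi> x (i+m) \<le> enat k})"
        by (rule openin_INT2) (auto intro: opk)
      then show ?thesis unfolding eq unfolding T_def by (rule openin_subtopology_Int2)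
    qed
    have mono: "H m n x \<le> H m (Suc n) x" for n x
      unfolding H_def by (rule Max_mono) auto
    from hur_bound[where h="H m", OF HT op mono] show ?thesis unfolding tT .
  qed
  then have "\<forall>m. \<exists>g. \<forall>x\<in>Xm m. \<forall>\<^sub>F n in sequentially. H m n x \<le> g n" by (rule allI)
  then have "\<exists>G. \<forall>m. \<forall>x\<in>Xm m. \<forall>\<^sub>F n in sequentially. H m n x \<le> G m n" by (rule choice)
  then obtain G where G: "\<forall>m. \<forall>x\<in>Xm m. \<forall>\<^sub>F n in sequentially. H m n x \<le> G m n" by (elim exE)
  define g where "g n = (\<Sum>m\<le>n. G m (n - m))" for n
  show ?thesis unfolding bounded_EF_def
  proof (intro exI[of _ g] ballI)
    fix f assume "f \<in> \<Psi> ` topspace X"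
    then obtain x where x: "x \<in> topspace X" and f: "f = \<Psi> x" by blast
    from inEF[OF x] obtain m where m: "\<forall>n\<ge>m. \<Psi> x n < \<infinity>" unfolding EF_def by blast
    have xm: "x \<in> Xm m" using x m by (simp add: Xm_def)
    from G xm have "\<forall>\<^sub>F n in sequentially. H m n x \<le> G m n" by blast
    then obtain M where M: "\<And>n. n \<ge> M \<Longrightarrow> H m n x \<le> G m n" unfolding eventually_sequentially by blast
    show "\<forall>\<^sub>F n in sequentially. f n \<le> enat (g n)"
      unfolding eventually_sequentially
    proof (intro exI[of _ "M+m"] allI impI)
      fix n assume n: "M + m \<le> n"
      define n' where "n' = n - m"
      have nn: "n' + m = n" "M \<le> n'" using n by (auto simp: n'_def)
      have "the_enat (\<Psi> x (n'+m)) \<le> H m n' x" unfolding H_def by (rule Max_ge) auto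
      also have "\<dots> \<le> G m n'" using M nn(2) by blast
      also have "\<dots> \<le> g n" unfolding g_def n'_def by (rule member_le_sum) (use n in auto)
      finally have le: "the_enat (\<Psi> x n) \<le> g n" using nn(1) by simp
      have "\<Psi> x n < \<infinity>" using m n by simp
      then have "\<Psi> x n = enat (the_enat (\<Psi> x n))" by (rule enat_fin)
      then show "f n \<le> enat (g n)" using le f by (metis enat_ord_simps(1))
    qed
  qed
qed



lemma bwd:
  assumes clop: "\<forall>U. openin X U \<longrightarrow>
             (\<exists>\<C>. countable \<C> \<and> (\<forall>C\<in>\<C>. openin X C \<and> closedin X C) \<and> \<Union>\<C> = U)"
    and B: "\<forall>\<Psi>. continuous_map X EF_top \<Psi> \<longrightarrow> bounded_EF (\<Psi> ` topspace X)"
  shows "hereditarily_hurewicz X"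
  unfolding hereditarily_hurewicz_def
proof (intro allI impI)
  fix Y assume Ysub: "Y \<subseteq> topspace X"
  define T where "T = subtopology X Y"
  have tT: "topspace T = Y" using Ysub by (auto simp: T_def)
  show "hurewicz (subtopology X Y)" unfolding T_def[symmetric] hurewicz_def
  proof (intro allI impI)
    fix U :: "nat \<Rightarrow> 'a set set"
    assume hU: "\<forall>n. countable (U n) \<and> (\<forall>V\<in>U n. openin T V) \<and> \<Union>(U n) = topspace T \<and>
             \<not> (\<exists>F. finite F \<and> F \<subseteq> U n \<and> \<Union>F = topspace T)"
    have Uc: "countable (U n)" for n using hU by blast
    have Uo: "V \<in> U n \<Longrightarrow> openin T V" for n V using hU by blast
    have Ucov: "\<Union>(U n) = Y" for n using hU tT by blast
    have Unf: "\<not> (\<exists>F. finite F \<and> F \<subseteq> U n \<and> \<Union>F = Y)" for n using hU tT by simp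
    have Yne: "Y \<noteq> {}"
    proof
      assume "Y = {}"
      then have "finite {} \<and> {} \<subseteq> U 0 \<and> \<Union>{} = Y" by simp
      then show False using Unf[of 0] by blast
    qed
    have exC: "\<exists>C. countable C \<and> (\<forall>c\<in>C. openin X c \<and> closedin X c) \<and> \<Union>C \<inter> Y = V"
      if V: "V \<in> U n" for n V
    proof -
      have "openin (subtopology X Y) V" using Uo[OF V] by (simp add: T_def)
      then obtain Op where Op: "openin X Op" "V = Op \<inter> Y" unfolding openin_subtopology by blast
      from clop Op(1) obtain C where C: "countable C" "\<forall>c\<in>C. openin X c \<and> closedin X c" "\<Union>C = Op"
        by blast
      show ?thesis using C Op(2) by blast
    qed
    define Cl where "Cl (n::nat) V = (SOME C. countable C \<and> (\<forall>c\<in>C. openin X c \<and> closedin X c) \<and> \<Union>C \<inter> Y = V)" for n V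
    have Cl: "countable (Cl n V) \<and> (\<forall>c\<in>Cl n V. openin X c \<and> closedin X c) \<and> \<Union>(Cl n V) \<inter> Y = V"
      if "V \<in> U n" for n V
      unfolding Cl_def by (rule someI_ex[OF exC[OF that]])
    define Fam where "Fam n = (\<Union>V\<in>U n. Cl n V)" for n
    have Famc: "countable (Fam n)" for n
      unfolding Fam_def by (rule countable_UN[OF Uc]) (use Cl in blast)
    have Famcov: "\<exists>c\<in>Fam n. y \<in> c" if y: "y \<in> Y" for n y
    proof -
      from y Ucov[of n] obtain V where V: "V \<in> U n" "y \<in> V" by blast
      then have "y \<in> \<Union>(Cl n V)" using Cl[OF V(1)] by blast
      then obtain c where "c \<in> Cl n V" "y \<in> c" by blast
      then show ?thesis using V(1) unfolding Fam_def by blast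
    qed
    have Famne: "Fam n \<noteq> {}" for n using Famcov Yne by blast
    define D where "D n j = from_nat_into (Fam n) j" for n j
    have Drange: "range (D n) = Fam n" for n unfolding D_def by (rule range_from_nat_into[OF Famne Famc])
    have DFam: "D n j \<in> Fam n" for n j unfolding D_def by (rule from_nat_into[OF Famne])
    have Dclop: "openin X (D n j) \<and> closedin X (D n j)" for n j
      using DFam[of n j] Cl unfolding Fam_def by blast
    have Dsub: "\<exists>V. V \<in> U n \<and> D n j \<inter> Y \<subseteq> V" for n j
    proof -
      from DFam[of n j] obtain V where V: "V \<in> U n" "D n j \<in> Cl n V" unfolding Fam_def by blast
      then have "D n j \<inter> Y \<subseteq> \<Union>(Cl n V) \<inter> Y" by blast
      also have "\<dots> = V" using Cl[OF V(1)] by blast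
      finally show ?thesis using V(1) by blast
    qed
    have Dcov: "\<exists>j. y \<in> D n j" if "y \<in> Y" for n y
      using Famcov[OF that, of n] Drange[of n] by (metis imageE)
    define Uof where "Uof n j = (SOME V. V \<in> U n \<and> D n j \<inter> Y \<subseteq> V)" for n j
    have Uof: "Uof n j \<in> U n \<and> D n j \<inter> Y \<subseteq> Uof n j" for n j
      unfolding Uof_def by (rule someI_ex[OF Dsub])
    define A where "A k i = (\<Inter>n\<in>{..k}. \<Union>j\<in>{..i}. D n j) \<inter> topspace X" for k i
    have Ao: "openin X (A k i)" for k i
      unfolding A_def by (rule openin_INT) (auto intro!: openin_Union simp: Dclop)
    have Ac: "closedin X (A k i)" for k i
    proof -
      have "closedin X (\<Inter>n\<in>{..k}. \<Union>j\<in>{..i}. D n j)"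
        by (rule closedin_Inter) (auto intro!: closedin_Union simp: Dclop)
      then show ?thesis unfolding A_def by (rule closedin_Int) simp
    qed
    have Amono: "A k i \<subseteq> A k i'" if "i \<le> i'" for k i i'
      unfolding A_def using that by fastforce
    have Aanti: "A k' i \<subseteq> A k i" if "k \<le> k'" for k k' i
      unfolding A_def using that by fastforce
    have YA: "\<exists>i. y \<in> A k i" if y: "y \<in> Y" for k y
    proof -
      define jn where "jn n = (SOME j. y \<in> D n j)" for n
      have jn: "y \<in> D n (jn n)" for n unfolding jn_def by (rule someI_ex[OF Dcov[OF y]])
      define i where "i = Max (jn ` {..k})"
      have "jn n \<le> i" if "n \<le> k" for n unfolding i_def using that by simp
      then have "y \<in> (\<Inter>n\<in>{..k}. \<Union>j\<in>{..i}. D n j)" using jn by fastforce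
      then show ?thesis using y Ysub unfolding A_def by blast
    qed
    define E where "E k = Ef (A k)" for k
    have cE: "continuous_map X euclidean (E k)" for k unfolding E_def by (rule Ef_cont[OF Ao Ac])
    have oE: "openin X {x\<in>topspace X. E k x = enat t}" for k t unfolding E_def by (rule Ef_clop(1)[OF Ao Ac])
    have clE: "closedin X {x\<in>topspace X. E k x = enat t}" for k t unfolding E_def by (rule Ef_clop(2)[OF Ao Ac])
    have mE: "E k x \<le> E k' x" if kk: "k \<le> k'" for k k' x
    proof (cases "E k' x")
      case (enat t)
      then have "x \<in> A k' t" unfolding E_def Ef_eq by blast
      then have "x \<in> A k t" using Aanti[OF kk] by blast
      then have "E k x \<le> enat t" unfolding E_def by (rule Ef_le)
      then show ?thesis using enat by simp
    next
      case infinity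
      then show ?thesis by simp
    qed
    have finE: "E k y < \<infinity>" if "y \<in> Y" for k y
    proof -
      from YA[OF that] obtain i where "y \<in> A k i" by blast
      then have "E k y \<le> enat i" unfolding E_def by (rule Ef_le)
      then show ?thesis using le_less_trans by fastforce
    qed
    have cPsi: "continuous_map X EF_top (PsiE E)" by (rule PsiE_cont[OF cE oE clE mE])
    from B cPsi have "bounded_EF (PsiE E ` topspace X)" by blast
    then obtain g where g: "\<forall>f\<in>PsiE E ` topspace X. \<forall>\<^sub>F n in sequentially. f n \<le> enat (g n)"
      unfolding bounded_EF_def by blast
    have gY: "\<forall>y\<in>Y. \<forall>\<^sub>F n in sequentially. PsiE E y n \<le> enat (g n)"
      using g Ysub by blast
    obtain hb where hb: "\<forall>y\<in>Y. \<forall>\<^sub>F k in sequentially. E k y \<le> enat (hb k)"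
      using PsiE_bound[OF gY finE] by blast
    define F where "F k = Uof k ` {..hb k}" for k
    define W where "W k = \<Union>(F k)" for k
    have Ffin: "finite (F k)" for k unfolding F_def by simp
    have FU: "F k \<subseteq> U k" for k unfolding F_def using Uof by blast
    have WY: "W k \<subseteq> Y" for k unfolding W_def using FU Ucov by blast
    have yev: "\<exists>M. \<forall>k\<ge>M. y \<in> W k" if y: "y \<in> Y" for y
    proof -
      from hb y obtain M where M: "\<And>k. k \<ge> M \<Longrightarrow> E k y \<le> enat (hb k)"
        unfolding eventually_sequentially by blast
      have "y \<in> W k" if k: "k \<ge> M" for k
      proof -
        obtain t where t: "E k y = enat t" using finE[OF y, of k] by (cases "E k y") auto
        then have "t \<le> hb k" using M[OF k] by simp
        moreover have "y \<in> A k t" using t unfolding E_def Ef_eq by blast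
        ultimately have "y \<in> A k (hb k)" using Amono by blast
        then obtain j where j: "j \<le> hb k" "y \<in> D k j" unfolding A_def by blast
        then have "y \<in> Uof k j" using Uof[of k j] y by blast
        moreover have "Uof k j \<in> F k" using j(1) unfolding F_def by blast
        ultimately show ?thesis unfolding W_def by blast
      qed
      then show ?thesis by blast
    qed
    have pc: "point_cofinite_cover T (range W)"
      unfolding point_cofinite_cover_def tT
    proof (intro conjI ballI)
      show "infinite (range W)"
      proof
        assume fr: "finite (range W)"
        obtain V0 where V0: "V0 \<in> range W" "infinite (W -` {V0})"
          using inf_img_fin_dom[OF fr infinite_UNIV_nat] by blast
        obtain k0 where k0: "V0 = W k0" using V0(1) by blast
        have YW: "Y \<subseteq> W k0"
        proof
          fix y assume y: "y \<in> Y"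
          from yev[OF y] obtain M where M: "\<forall>k\<ge>M. y \<in> W k" by blast
          from V0(2) obtain k where k: "k \<ge> M" "k \<in> W -` {V0}"
            unfolding infinite_nat_iff_unbounded_le by blast
          have "y \<in> W k" using M k(1) by blast
          moreover have "W k = W k0" using k(2) k0 by simp
          ultimately show "y \<in> W k0" by simp
        qed
        have e: "\<Union>(F k0) = Y" using WY[of k0] YW unfolding W_def by (rule subset_antisym)
        have "finite (F k0) \<and> F k0 \<subseteq> U k0 \<and> \<Union>(F k0) = Y" by (intro conjI Ffin FU e)
        then have "\<exists>F'. finite F' \<and> F' \<subseteq> U k0 \<and> \<Union>F' = Y" by (rule exI)
        with Unf[of k0] show False by (rule notE)
      qed
      show "\<Union>(range W) = Y"
      proof
        show "\<Union>(range W) \<subseteq> Y" using WY by (simp add: UN_subset_iff)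
        show "Y \<subseteq> \<Union>(range W)"
        proof
          fix y assume y: "y \<in> Y"
          from yev[OF y] obtain M where "\<forall>k\<ge>M. y \<in> W k" by blast
          then have "y \<in> W M" by simp
          then show "y \<in> \<Union>(range W)" by (rule UN_I[rotated]) simp
        qed
      qed
      fix y assume y: "y \<in> Y"
      from yev[OF y] obtain M where M: "\<forall>k\<ge>M. y \<in> W k" by blast
      have "{V \<in> range W. y \<notin> V} \<subseteq> W ` {..<M}"
      proof
        fix V assume "V \<in> {V \<in> range W. y \<notin> V}"
        then obtain k where "V = W k" "y \<notin> W k" by blast
        then show "V \<in> W ` {..<M}" using M by (metis lessThan_iff not_le_imp_less rev_image_eqI)
      qed
      then show "finite {V \<in> range W. y \<notin> V}" by (rule finite_subset) simp
    qed
    have "(\<forall>n. finite (F n) \<and> F n \<subseteq> U n) \<and> point_cofinite_cover T (range (\<lambda>n. \<Union>(F n)))"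
      using Ffin FU pc unfolding W_def by simp
    then show "\<exists>F. (\<forall>n. finite (F n) \<and> F n \<subseteq> U n) \<and> point_cofinite_cover T (range (\<lambda>n. \<Union>(F n)))"
      by (rule exI[of _ F])
  qed
qed


theorem mainTheorem1:
  fixes X :: "'a topology"
  assumes "\<forall>U. openin X U \<longrightarrow>
             (\<exists>\<C>. countable \<C> \<and> (\<forall>C\<in>\<C>. openin X C \<and> closedin X C) \<and> \<Union>\<C> = U)"
  shows "hereditarily_hurewicz X \<longleftrightarrow>
         (\<forall>\<Psi>. continuous_map X EF_top \<Psi> \<longrightarrow> bounded_EF (\<Psi> ` topspace X))"
proof
  assume HH: "hereditarily_hurewicz X"
  show "\<forall>\<Psi>. continuous_map X EF_top \<Psi> \<longrightarrow> bounded_EF (\<Psi> ` topspace X)"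
  proof (intro allI impI)
    fix \<Psi> :: "'a \<Rightarrow> nat \<Rightarrow> enat"
    assume "continuous_map X EF_top \<Psi>"
    then show "bounded_EF (\<Psi> ` topspace X)" by (rule fwd[OF HH])
  qed
next
  assume "\<forall>\<Psi>. continuous_map X EF_top \<Psi> \<longrightarrow> bounded_EF (\<Psi> ` topspace X)"
  then show "hereditarily_hurewicz X" by (rule bwd[OF assms])
qed

end
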